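(* Let $q\in(0,1)$, a fixed partition $\mathcal N=\mathcal H_0\sqcup\mathcal H_1$, and $p\in[0,1]^N$ be given. For each $i\in\mathcal L\cup\mathcal R\cup\{\tilde k\}$ let $$\mathrm{FDP}_i:=\max_{p'\in[0,1]^N:\ \|p-p'\|_0\le1,\ \tilde k(p')=i}\mathrm{FDP}[BH_q;p'].$$ Then $$\max_{p'\in[0,1]^N:\ \|p-p'\|_0\le1}\mathrm{FDP}[BH_q;p']=\max_{i\in\mathcal L\cup\mathcal R\cup\{\tilde k\}}\mathrm{FDP}_i.$$
   Context: $\mathcal N=\{1,\dots,N\}$. For $x\in[0,1]^N$, $B^{\mathcal N}_{1:i}(x)=|\{j\in\mathcal N:0\le x_j<iq/N\}|$ ($B^{\mathcal N}_{1:0}=0$), $\tilde k(x)=\max\{i\in\{0,\dots,N\}:B^{\mathcal N}_{1:i}(x)=i\}$; the Benjamini–Hochberg procedure $BH_q$ rejects tests $j$ with $x_j<\tilde k(x)q/N$, and $\mathrm{FDP}[BH_q;x]=|\{j\in\mathcal H_0:x_j<\tilde k(x)q/N\}|/\max(\tilde k(x),1)$. Write $\tilde k=\tilde k(p)$, $B^{\mathcal N}_{1:i}=B^{\mathcal N}_{1:i}(p)$. $\|p-p'\|_0$ is the number of differing coordinates. $\mathcal L:=\{i\in\{\tilde k+1,\dots,N\}:B^{\mathcal N}_{1:i}=i-1\}$. $i^*:=\max(0,\max\{i\in\{1,\dots,\tilde k-1\}:B^{\mathcal N}_{1:i}=i+1\})$ (inner maximum omitted if empty), and $\mathcal R:=\{i\in\{i^*+1,\dots,\tilde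 k-1\}:B^{\mathcal N}_{1:i}=i\}\cup\{i^*\}$. *)

theory Defs
  imports Main Complex_Main
begin

text \<open>Vectors in [0,1]^N are represented as functions nat => real; only the
  coordinates 1..N are relevant.\<close>

definition Bcount :: "nat \<Rightarrow> real \<Rightarrow> (nat \<Rightarrow> real) \<Rightarrow> nat \<Rightarrow> nat" where
  "Bcount N q x i = card {j \<in> {1..N}. 0 \<le> x j \<and> x j < real i * q / real N}"

definition ktilde :: "nat \<Rightarrow> real \<Rightarrow> (nat \<Rightarrow> real) \<Rightarrow> nat" where
  "ktilde N q x = Max {i \<in> {0..N}. Bcount N q x i = i}"

definition FDP_BH :: "nat \<Rightarrow> real \<Rightarrow> nat set \<Rightarrow> (nat \<Rightarrow> real) \<Rightarrow> real" where
  "FDP_BH N q H0 x =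
     real (card {j \<in> H0. x j < real (ktilde N q x) * q / real N}) / real (max (ktilde N q x) 1)"

definition hamming :: "nat \<Rightarrow> (nat \<Rightarrow> real) \<Rightarrow> (nat \<Rightarrow> real) \<Rightarrow> nat" where
  "hamming N p p' = card {j \<in> {1..N}. p j \<noteq> p' j}"

definition unit_cube :: "nat \<Rightarrow> (nat \<Rightarrow> real) set" where
  "unit_cube N = {x. \<forall>j\<in>{1..N}. 0 \<le> x j \<and> x j \<le> 1}"

definition nbhd1 :: "nat \<Rightarrow> (nat \<Rightarrow> real) \<Rightarrow> (nat \<Rightarrow> real) set" where
  "nbhd1 N p = {p' \<in> unit_cube N. hamming N p p' \<le> 1}"

definition Lset :: "nat \<Rightarrow> real \<Rightarrow> (nat \<Rightarrow> real) \<Rightarrow> nat set" where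
  "Lset N q p = {i \<in> {ktilde N q p + 1..N}. Bcount N q p i = i - 1}"

definition istar :: "nat \<Rightarrow> real \<Rightarrow> (nat \<Rightarrow> real) \<Rightarrow> nat" where
  "istar N q p = (let S = {i \<in> {1..ktilde N q p - 1}. Bcount N q p i = i + 1}
                  in max 0 (if S = {} then 0 else Max S))"

definition Rset :: "nat \<Rightarrow> real \<Rightarrow> (nat \<Rightarrow> real) \<Rightarrow> nat set" where
  "Rset N q p = {i \<in> {istar N q p + 1..ktilde N q p - 1}. Bcount N q p i = i} \<union> {istar N q p}"

definition FDP_i :: "nat \<Rightarrow> real \<Rightarrow> nat set \<Rightarrow> (nat \<Rightarrow> real) \<Rightarrow> nat \<Rightarrow> real" where
  "FDP_i N q H0 p i = Max (FDP_BH N q H0 ` {p' \<in> nbhd1 N p. ktilde N q p' = i})"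

definition FDP_i_feasible :: "nat \<Rightarrow> real \<Rightarrow> (nat \<Rightarrow> real) \<Rightarrow> nat \<Rightarrow> bool" where
  "FDP_i_feasible N q p i = ({p' \<in> nbhd1 N p. ktilde N q p' = i} \<noteq> {})"

end

theory Submission imports Defs begin

lemma disc_ivt:
  fixes g :: "nat \<Rightarrow> int"
  assumes step: "\<And>i. g (Suc i) \<ge> g i - 1" and "x \<le> y" and "g x \<ge> c" and "g y \<le> c"
  shows "\<exists>z\<in>{x..y}. g z = c"
  using assms(2,4)
proof (induction y rule: dec_induct)
  case base
  then show ?case using assms(3) by auto
next
  case (step y)
  show ?case
  proof (cases "g y \<le> c")
    case True
    then show ?thesis using step.IH by auto
  next
    case False
    then have "g (Suc y) = c" using assms(1)[of y] step.prems by linarith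
    then show ?thesis using step.hyps by auto
  qed
qed

lemma key_comb:
  fixes B B' :: "nat \<Rightarrow> nat" and N :: nat
  assumes H1: "\<And>i. B' i \<le> B i + 1" "\<And>i. B i \<le> B' i + 1"
    and H2: "\<And>i j. i \<le> j \<Longrightarrow> B i \<le> B j" "\<And>i j. i \<le> j \<Longrightarrow> B' i \<le> B' j"
    and H3: "B 0 = 0" "B' 0 = 0"
    and H4: "B N \<le> N" "B' N \<le> N"
    and H5: "\<And>k. B' k < B k \<Longrightarrow> (\<forall>i\<le>k. B' i \<le> B i)"
    and kdef: "k = Max {i \<in> {0..N}. B i = i}"
    and k'def: "k' = Max {i \<in> {0..N}. B' i = i}"
    and sdef: "S = {i \<in> {1..k - 1}. B i = i + 1}"
    and idef: "istr = max 0 (if S = {} then 0 else Max S)"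
  shows "k' = k \<or> (k' \<in> {k+1..N} \<and> B k' = k' - 1) \<or> (k' \<in> {istr+1..k-1} \<and> B k' = k') \<or> k' = istr"
proof -
  define Z where "Z = {i \<in> {0..N}. B i = i}"
  define Z' where "Z' = {i \<in> {0..N}. B' i = i}"
  have fZ: "finite Z" "finite Z'" unfolding Z_def Z'_def by auto
  have 0: "0 \<in> Z" "0 \<in> Z'" unfolding Z_def Z'_def using H3 by auto
  have kZ: "k \<in> Z" using kdef Max_in[OF fZ(1)] 0 unfolding Z_def by blast
  have k'Z: "k' \<in> Z'" using k'def Max_in[OF fZ(2)] 0 unfolding Z'_def by blast
  have kmax: "\<And>i. i \<le> N \<Longrightarrow> B i = i \<Longrightarrow> i \<le> k" using kdef fZ(1) unfolding Z_def by auto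
  have k'max: "\<And>i. i \<le> N \<Longrightarrow> B' i = i \<Longrightarrow> i \<le> k'" using k'def fZ(2) unfolding Z'_def by auto
  have kN: "k \<le> N" "B k = k" using kZ unfolding Z_def by auto
  have k'N: "k' \<le> N" "B' k' = k'" using k'Z unfolding Z'_def by auto
  define f where "f i = int (B i) - int i" for i
  define f' where "f' i = int (B' i) - int i" for i
  have fs: "\<And>i. f (Suc i) \<ge> f i - 1" proof -
    fix i have "B i \<le> B (Suc i)" using H2(1) by simp
    then show "f (Suc i) \<ge> f i - 1" unfolding f_def by simp
  qed
  have fs': "\<And>i. f' (Suc i) \<ge> f' i - 1" proof -
    fix i have "B' i \<le> B' (Suc i)" using H2(2) by simp
    then show "f' (Suc i) \<ge> f' i - 1" unfolding f'_def by simp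
  qed
  consider "k' = k" | "k < k'" | "k' < k" by linarith
  then show ?thesis
  proof cases
    case 1 then show ?thesis by simp
  next
    case 2
    have "B k' \<noteq> k'" using kmax[of k'] k'N 2 by auto
    moreover have "B k' \<noteq> k' + 1"
    proof
      assume a: "B k' = k' + 1"
      obtain z where z: "z \<in> {k'..N}" "f z = 0"
        using disc_ivt[of f k' N 0, OF fs] k'N a H4 unfolding f_def by auto
      then have "B z = z" unfolding f_def by auto
      then have "z \<le> k" using kmax z by auto
      then show False using z 2 by auto
    qed
    ultimately have "B k' = k' - 1" using H1[of k'] k'N by linarith
    then show ?thesis using 2 k'N by auto
  next
    case 3
    have "B' k \<noteq> k" using k'max[of k] kN 3 by auto
    moreover have "B' k \<noteq> k + 1"
    proof
      assume a: "B' k = k + 1"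
      obtain z where z: "z \<in> {k..N}" "f' z = 0"
        using disc_ivt[of f' k N 0, OF fs'] kN a H4 unfolding f'_def by auto
      then have "B' z = z" unfolding f'_def by auto
      then have "z \<le> k'" using k'max z by auto
      then show False using z 3 by auto
    qed
    ultimately have "B' k < B k" using H1[of k] kN by linarith
    then have le: "\<And>i. i \<le> k \<Longrightarrow> B' i \<le> B i" using H5 by blast
    have fS: "finite S" unfolding sdef by auto
    have iS: "S \<noteq> {} \<Longrightarrow> istr \<in> S \<and> (\<forall>i\<in>S. i \<le> istr)" using idef fS Max_in by auto
    have iE: "S = {} \<Longrightarrow> istr = 0" using idef by auto
    have ik: "istr \<le> k'"
    proof (cases "S = {}")
      case True then show ?thesis using iE by auto
    next
      case False
      then have a: "istr \<in> S" using iS by auto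
      then have b: "B istr = istr + 1" "istr \<le> k - 1" "1 \<le> istr" unfolding sdef by auto
      have "f' istr \<ge> 0" using H1(2)[of istr] b unfolding f'_def by linarith
      moreover have "f' k \<le> 0" using \<open>B' k < B k\<close> kN unfolding f'_def by linarith
      ultimately obtain z where z: "z \<in> {istr..k}" "f' z = 0"
        using disc_ivt[of f' istr k 0, OF fs'] b by (metis diff_le_self le_trans)
      then have "B' z = z" unfolding f'_def by auto
      then have "z \<le> k'" using k'max z kN by auto
      then show ?thesis using z by auto
    qed
    show ?thesis
    proof (cases "k' = istr")
      case True then show ?thesis by auto
    next
      case False
      then have lt: "istr < k'" using ik by auto
      have ge: "B k' \<ge> k'" using le[of k'] 3 k'N by auto
      have "B k' \<noteq> k' + 1"
      proof
        assume "B k' = k' + 1"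
        then have "k' \<in> S" unfolding sdef using lt 3 by auto
        then show False using iS lt by (metis empty_iff leD)
      qed
      moreover have "\<not> B k' \<ge> k' + 2"
      proof
        assume a: "B k' \<ge> k' + 2"
        obtain z where z: "z \<in> {k'..k}" "f z = 1"
          using disc_ivt[of f k' k 1, OF fs] a kN 3 unfolding f_def by auto
        then have "B z = z + 1" unfolding f_def by auto
        moreover then have "z \<noteq> k" using kN by auto
        ultimately have "z \<in> S" unfolding sdef using z lt by auto
        then show False using iS z lt by (metis atLeastAtMost_iff empty_iff leD le_less_trans)
      qed
      ultimately have "B k' = k'" using ge by linarith
      then show ?thesis using lt 3 by auto
    qed
  qed
qed


lemma Bc_split:
  "Bcount N q x i = card {j \<in> {1..N} - {j0}. 0 \<le> x j \<and> x j < real i * q / real N}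
     + (if j0 \<in> {1..N} \<and> 0 \<le> x j0 \<and> x j0 < real i * q / real N then 1 else 0)"
proof (cases "j0 \<in> {1..N} \<and> 0 \<le> x j0 \<and> x j0 < real i * q / real N")
  case True
  have "{j \<in> {1..N}. 0 \<le> x j \<and> x j < real i * q / real N}
        = insert j0 {j \<in> {1..N} - {j0}. 0 \<le> x j \<and> x j < real i * q / real N}" using True by auto
  then show ?thesis unfolding Bcount_def using True by simp
next
  case False
  have "{j \<in> {1..N}. 0 \<le> x j \<and> x j < real i * q / real N}
        = {j \<in> {1..N} - {j0}. 0 \<le> x j \<and> x j < real i * q / real N}" using False by auto
  then show ?thesis unfolding Bcount_def using False by simp
qed

lemma thr_mono: "0 < q \<Longrightarrow> i \<le> j \<Longrightarrow> real i * q / real N \<le> real j * q / real N"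
  by (simp add: divide_right_mono)

lemma Bc_mono: "0 < q \<Longrightarrow> i \<le> j \<Longrightarrow> Bcount N q x i \<le> Bcount N q x j"
  unfolding Bcount_def
  by (rule card_mono) (auto dest: thr_mono[of q i j N])

lemma Bc_le: "Bcount N q x i \<le> N"
  unfolding Bcount_def
  by (metis (no_types, lifting) card_atLeastAtMost card_mono diff_Suc_1 finite_atLeastAtMost mem_Collect_eq subsetI)

lemma Bc_0: "Bcount N q x 0 = 0"
  unfolding Bcount_def by auto

lemma ktilde_cases:
  assumes q: "0 < q" and p: "p \<in> unit_cube N" and p': "p' \<in> nbhd1 N p"
  shows "ktilde N q p' \<in> Lset N q p \<union> Rset N q p \<union> {ktilde N q p}"
proof -
  have p'u: "p' \<in> unit_cube N" and hd: "hamming N p p' \<le> 1" using p' unfolding nbhd1_def by auto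
  define D where "D = {j \<in> {1..N}. p j \<noteq> p' j}"
  have "card D \<le> 1" using hd unfolding D_def hamming_def by simp
  then obtain j0 where j0: "\<And>j. j \<in> {1..N} \<Longrightarrow> j \<noteq> j0 \<Longrightarrow> p j = p' j"
  proof (cases "D = {}")
    case True then show ?thesis using that unfolding D_def by auto
  next
    case False
    then have "card D = 1" using \<open>card D \<le> 1\<close> unfolding D_def
      by (metis (no_types, lifting) One_nat_def card_0_eq finite_atLeastAtMost finite_subset le_Suc_eq le_zero_eq mem_Collect_eq subsetI)
    then obtain j1 where "D = {j1}" using card_1_singletonE by blast
    then show ?thesis using that[of j1] unfolding D_def by auto
  qed
  define B where "B = Bcount N q p"
  define B' where "B' = Bcount N q p'"
  define R where "R i = card {j \<in> {1..N} - {j0}. 0 \<le> p j \<and> p j < real i * q / real N}" for i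
  have R': "R i = card {j \<in> {1..N} - {j0}. 0 \<le> p' j \<and> p' j < real i * q / real N}" for i
  proof -
    have "{j \<in> {1..N} - {j0}. 0 \<le> p j \<and> p j < real i * q / real N}
        = {j \<in> {1..N} - {j0}. 0 \<le> p' j \<and> p' j < real i * q / real N}" using j0 by auto
    then show ?thesis unfolding R_def by simp
  qed
  have Bs: "B i = R i + (if j0 \<in> {1..N} \<and> 0 \<le> p j0 \<and> p j0 < real i * q / real N then 1 else 0)" for i
    unfolding B_def R_def by (rule Bc_split)
  have Bs': "B' i = R i + (if j0 \<in> {1..N} \<and> 0 \<le> p' j0 \<and> p' j0 < real i * q / real N then 1 else 0)" for i
    unfolding B'_def R' by (rule Bc_split)
  have H5: "\<forall>i\<le>k. B' i \<le> B i" if a: "B' k < B k" for k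
  proof -
    have c: "j0 \<in> {1..N}" "\<not> (0 \<le> p' j0 \<and> p' j0 < real k * q / real N)"
      using a Bs[of k] Bs'[of k] by (auto split: if_splits)
    have "0 \<le> p' j0" using p'u c(1) unfolding unit_cube_def by auto
    then have ge: "p' j0 \<ge> real k * q / real N" using c by auto
    show ?thesis
    proof (intro allI impI)
      fix i assume "i \<le> k"
      then have "p' j0 \<ge> real i * q / real N" using ge thr_mono[OF q, of i k N] by linarith
      then show "B' i \<le> B i" using Bs[of i] Bs'[of i] by auto
    qed
  qed
  have main: "ktilde N q p' = ktilde N q p \<or> (ktilde N q p' \<in> {ktilde N q p+1..N} \<and> B (ktilde N q p') = ktilde N q p' - 1)
     \<or> (ktilde N q p' \<in> {istar N q p+1..ktilde N q p-1} \<and> B (ktilde N q p') = ktilde N q p') \<or> ktilde N q p' = istar N q p"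
  proof (rule key_comb[where B=B and B'=B' and N=N])
    show "B' i \<le> B i + 1" for i using Bs[of i] Bs'[of i] by simp
    show "B i \<le> B' i + 1" for i using Bs[of i] Bs'[of i] by simp
    show "B i \<le> B j" if "i \<le> j" for i j unfolding B_def by (rule Bc_mono[OF q that])
    show "B' i \<le> B' j" if "i \<le> j" for i j unfolding B'_def by (rule Bc_mono[OF q that])
    show "B 0 = 0" "B' 0 = 0" unfolding B_def B'_def by (rule Bc_0)+
    show "B N \<le> N" "B' N \<le> N" unfolding B_def B'_def by (rule Bc_le)+
    show "\<And>k. B' k < B k \<Longrightarrow> \<forall>i\<le>k. B' i \<le> B i" by (rule H5)
    show "ktilde N q p = Max {i \<in> {0..N}. B i = i}" unfolding ktilde_def B_def ..
    show "ktilde N q p' = Max {i \<in> {0..N}. B' i = i}" unfolding ktilde_def B'_def ..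
    show "{i \<in> {1..ktilde N q p - 1}. B i = i + 1} = {i \<in> {1..ktilde N q p - 1}. B i = i + 1}" ..
    show "istar N q p = max 0 (if {i \<in> {1..ktilde N q p - 1}. B i = i + 1} = {} then 0 else Max {i \<in> {1..ktilde N q p - 1}. B i = i + 1})"
      unfolding istar_def B_def Let_def ..
  qed
  then show ?thesis unfolding Lset_def Rset_def B_def by auto
qed


lemma ktilde_le: "ktilde N q x \<le> N"
proof -
  have "0 \<in> {i \<in> {0..N}. Bcount N q x i = i}" using Bc_0 by auto
  then have "ktilde N q x \<in> {i \<in> {0..N}. Bcount N q x i = i}"
    unfolding ktilde_def by (intro Max_in) auto
  then show ?thesis by auto
qed

lemma FDP_in:
  assumes "H0 \<subseteq> {1..N}"
  shows "FDP_BH N q H0 x \<in> (\<lambda>(a,b). real a / real b) ` ({0..N} \<times> {0..max N 1})"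
proof -
  have "card {j \<in> H0. x j < real (ktilde N q x) * q / real N} \<le> N"
    using assms by (metis (no_types, lifting) card_atLeastAtMost card_mono diff_Suc_1 finite_atLeastAtMost mem_Collect_eq subset_iff)
  moreover have "max (ktilde N q x) 1 \<le> max N 1" using ktilde_le[of N q x] by auto
  ultimately show ?thesis unfolding FDP_BH_def
    by (intro image_eqI[where x="(card {j \<in> H0. x j < real (ktilde N q x) * q / real N}, max (ktilde N q x) 1)"]) auto
qed

theorem theorem5:
  fixes N :: nat and q :: real and H0 H1 :: "nat set" and p :: "nat \<Rightarrow> real"
  assumes "0 < q" and "q < 1"
    and "H0 \<union> H1 = {1..N}" and "H0 \<inter> H1 = {}"
    and "p \<in> unit_cube N"
  shows "Max (FDP_BH N q H0 ` nbhd1 N p) =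
         Max ((FDP_i N q H0 p) `
              {i \<in> Lset N q p \<union> Rset N q p \<union> {ktilde N q p}. FDP_i_feasible N q p i})"
proof -
  have H0: "H0 \<subseteq> {1..N}" using assms(3) by auto
  define V where "V = (\<lambda>(a,b). real a / real b) ` ({0..N} \<times> {0..max N 1})"
  have fV: "finite V" unfolding V_def by auto
  have fin: "finite (FDP_BH N q H0 ` A)" for A
    by (rule finite_subset[OF _ fV]) (use FDP_in[OF H0] in \<open>auto simp: V_def\<close>)
  have pn: "p \<in> nbhd1 N p" using assms(5) unfolding nbhd1_def hamming_def by auto
  define I where "I = {i \<in> Lset N q p \<union> Rset N q p \<union> {ktilde N q p}. FDP_i_feasible N q p i}"
  have fI: "finite I" unfolding I_def Lset_def Rset_def by auto
  have kI: "ktilde N q p \<in> I" unfolding I_def FDP_i_feasible_def using pn by auto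
  have le1: "FDP_i N q H0 p i \<le> Max (FDP_BH N q H0 ` nbhd1 N p)" if "i \<in> I" for i
  proof -
    have ne: "{p' \<in> nbhd1 N p. ktilde N q p' = i} \<noteq> {}" using that unfolding I_def FDP_i_feasible_def by auto
    show ?thesis unfolding FDP_i_def
      by (rule Max_mono) (use ne fin in auto)
  qed
  have "Max (FDP_BH N q H0 ` nbhd1 N p) \<in> FDP_BH N q H0 ` nbhd1 N p"
    by (rule Max_in) (use fin pn in auto)
  then obtain p' where p': "p' \<in> nbhd1 N p" and eq: "Max (FDP_BH N q H0 ` nbhd1 N p) = FDP_BH N q H0 p'"
    by auto
  define i where "i = ktilde N q p'"
  have iI: "i \<in> I" unfolding I_def FDP_i_feasible_def i_def
    using ktilde_cases[OF assms(1) assms(5) p'] p' by auto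
  have "FDP_BH N q H0 p' \<le> FDP_i N q H0 p i" unfolding FDP_i_def
    by (rule Max_ge) (use fin p' i_def in auto)
  also have "\<dots> \<le> Max (FDP_i N q H0 p ` I)" by (rule Max_ge) (use fI iI in auto)
  finally have ge: "Max (FDP_BH N q H0 ` nbhd1 N p) \<le> Max (FDP_i N q H0 p ` I)" using eq by simp
  have "Max (FDP_i N q H0 p ` I) \<le> Max (FDP_BH N q H0 ` nbhd1 N p)"
    using le1 fI kI by (subst Max_le_iff) auto
  with ge show ?thesis unfolding I_def by linarith
qed

end
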